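(* In the situation of Theorem 2 (a fully regular system $A(y)=b$ with $A=A_\ell\sigma^\ell+\dots+A_0$, $A_i\in\mathbb{F}[t]^{n\times n}$, $b\in\mathbb{F}[t]^n$, $\det A_\ell\ne0$; a $P\in\mathrm{GL}_n(\mathbb{F}(t)[\sigma,\sigma^{-1}])$ with $PA=\sum_{i=0}^{\tilde\ell}\tilde A_i\sigma^i$, $\tilde A_i\in\mathbb{F}[t]^{n\times n}$, $P(b)\in\mathbb{F}[t]^n$, $\det\tilde A_0\ne0$; $m$ the common denominator of $A_\ell^{-1}$, $p$ the common denominator of $\tilde A_0^{-1}$; $D=\mathrm{disp}(\sigma^{-\ell}(\operatorname{ap}(m)),\operatorname{ap}(p))$; and a solution $y=d^{-1}z$ in reduced representation), one has $$\operatorname{ap}(d)\;\Big|\;\gcd\Big(\prod_{j=0}^{D}\sigma^{-\ell-j}(m),\ \prod_{j=0}^{D}\sigma^{j}(p)\Big).$$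
   Context: All fields contain $\mathbb{Q}$. $(\mathbb{F}(t),\sigma)$ is a $\Pi\Sigma$-extension of the difference field $(\mathbb{F},\sigma)$: $\sigma$ is an automorphism of the rational function field $\mathbb{F}(t)$ restricting to an automorphism of $\mathbb{F}$, with $\sigma(t)=t+\beta$ ($\beta\in\mathbb{F}\setminus\{0\}$, $\Sigma$-monomial) or $\sigma(t)=\alpha t$ ($\alpha\in\mathbb{F}\setminus\{0\}$, $\Pi$-monomial), and the fixed field of $\sigma$ on $\mathbb{F}(t)$ equals that on $\mathbb{F}$. For $a,b\in\mathbb{F}[t]\setminus\{0\}$: $\mathrm{spread}(a,b)=\{k\ge0:\gcd(a,\sigma^k(b))\notin\mathbb{F}\}$, $\mathrm{disp}(a,b)=\max\mathrm{spread}(a,b)$ ($\max\emptyset=-\infty$, max of infinite set $=\infty$); empty products equal $1$. $\mathrm{per}(a)=1$ for a $\Sigma$-monomial, $t^\mu$ with $\mu$ maximal such that $t^\mu\mid a$ for a $\Pi$-monomial; $\operatorname{ap}(a)=a/\mathrm{per}(a)$. Reduced representation: $d\in\mathbb{F}[t]\setminus\{0\}$, $z\in\mathbb{F}[t]^n$, $\gcd(z_1,\dots,z_n,d)=1$. $\mathbb{F}(t)[\sigma]$ is the Ore polynomial ring with $\sigma a=\sigma(a)\sigma$, $\mathbb{F}(t)[\sigma,\sigma^{-1}]$ its localisation at powers of $\sigma$; operators act on $\mathbb{F}(t)$ by $(\sum a_i\sigma^i)(\alpha)=\sum a_i\sigma^i(\alpha)$, operator matrices act on vectors as matrix–vector products;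 unimodular means invertible over the same ring. A square system $A(y)=b$ with $A=\sum_{i=0}^\ell A_i\sigma^i$ is fully regular if $\det A_\ell\ne0$ and there is a unimodular $P$ over $\mathbb{F}(t)[\sigma,\sigma^{-1}]$ with $PA\in\mathbb{F}(t)[\sigma]^{n\times n}$ having trailing coefficient matrix of nonzero determinant. *)

theory Defs
  imports "HOL-Analysis.Determinants" "HOL-Computational_Algebra.Computational_Algebra"
    "HOL-Computational_Algebra.Normalized_Fraction" "HOL-Library.Extended_Real"
begin

text \<open>The ground field F is a type 'a of class field_char_0; F[t] is 'a poly and
  F(t) is 'a poly fract.  The automorphism sigma of F(t) is determined by an
  automorphism s of F (acting on coefficients) and by the image tt of t, which is
  [:beta,1:] (Sigma-monomial) or [:0,alpha:] (Pi-monomial).\<close>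

definition field_aut :: "('a::field \<Rightarrow> 'a) \<Rightarrow> bool" where
  "field_aut s \<longleftrightarrow> bij s \<and> (\<forall>x y. s (x + y) = s x + s y) \<and> (\<forall>x y. s (x * y) = s x * s y) \<and> s 1 = 1"

definition sig_poly :: "('a::field \<Rightarrow> 'a) \<Rightarrow> 'a poly \<Rightarrow> 'a poly \<Rightarrow> 'a poly" where
  "sig_poly s tt q = pcompose (map_poly s q) tt"

definition sig_fract :: "('a::{field_char_0,field_gcd} \<Rightarrow> 'a) \<Rightarrow> 'a poly \<Rightarrow> 'a poly fract \<Rightarrow> 'a poly fract" where
  "sig_fract s tt x = (let q = quot_of_fract x in
      Fract (sig_poly s tt (fst q)) (sig_poly s tt (snd q)))"

definition ipow :: "('b \<Rightarrow> 'b) \<Rightarrow> int \<Rightarrow> 'b \<Rightarrow> 'b" where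
  "ipow f k = (if 0 \<le> k then f ^^ nat k else (inv f) ^^ nat (- k))"

definition PiSigma_ext :: "('a::{field_char_0,field_gcd} \<Rightarrow> 'a) \<Rightarrow> 'a poly \<Rightarrow> bool \<Rightarrow> bool" where
  "PiSigma_ext s tt isSigma \<longleftrightarrow> field_aut s \<and>
     (if isSigma then (\<exists>beta. beta \<noteq> 0 \<and> tt = [:beta, 1:])
                 else (\<exists>alpha. alpha \<noteq> 0 \<and> tt = [:0, alpha:])) \<and>
     {f. sig_fract s tt f = f} = (\<lambda>c. to_fract [:c:]) ` {c. s c = c}"

definition spread :: "('a::{field_char_0,field_gcd} \<Rightarrow> 'a) \<Rightarrow> 'a poly \<Rightarrow> 'a poly \<Rightarrow> 'a poly \<Rightarrow> nat set" where
  "spread s tt a b = {k. degree (gcd a ((sig_poly s tt ^^ k) b)) \<noteq> 0}"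

definition disp :: "('a::{field_char_0,field_gcd} \<Rightarrow> 'a) \<Rightarrow> 'a poly \<Rightarrow> 'a poly \<Rightarrow> 'a poly \<Rightarrow> ereal" where
  "disp s tt a b = (let S = spread s tt a b in
      if S = {} then - \<infinity> else if finite S then ereal (real (Max S)) else \<infinity>)"

definition per :: "bool \<Rightarrow> 'a::field poly \<Rightarrow> 'a poly" where
  "per isSigma a = (if isSigma then 1 else monom 1 (order 0 a))"

definition ap :: "bool \<Rightarrow> 'a::field poly \<Rightarrow> 'a poly" where
  "ap isSigma a = a div per isSigma a"

definition common_denom :: "'a::{field_char_0,field_gcd} poly \<Rightarrow> ('a poly fract)^'n^'m \<Rightarrow> bool" where
  "common_denom m M \<longleftrightarrow> m \<noteq> 0 \<and> (\<forall>i j. to_fract m * M$i$j \<in> range to_fract) \<and>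
     (\<forall>m'. m' \<noteq> 0 \<and> (\<forall>i j. to_fract m' * M$i$j \<in> range to_fract) \<longrightarrow> m dvd m')"

definition fvec :: "('a::idom)^'n \<Rightarrow> ('a fract)^'n" where
  "fvec v = (\<chi> i. to_fract (v$i))"
definition fmat :: "('a::idom)^'n^'m \<Rightarrow> ('a fract)^'n^'m" where
  "fmat M = (\<chi> i j. to_fract (M$i$j))"

text \<open>An n x n matrix over F(t)[sigma,sigma^-1] is represented as a finitely supported
  Laurent polynomial in sigma with coefficients in F(t)^(n x n):  P = sum_k P k sigma^k.\<close>
type_synonym ('a,'n) opmat = "int \<Rightarrow> ('a poly fract)^'n^'n"

definition finsupp :: "(int \<Rightarrow> 'b::zero) \<Rightarrow> bool" where
  "finsupp P \<longleftrightarrow> finite {k. P k \<noteq> 0}"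

definition sig_mat :: "('a::{field_char_0,field_gcd} \<Rightarrow> 'a) \<Rightarrow> 'a poly \<Rightarrow> int \<Rightarrow> ('a poly fract)^'n^'m \<Rightarrow> ('a poly fract)^'n^'m" where
  "sig_mat s tt k M = (\<chi> i j. ipow (sig_fract s tt) k (M$i$j))"

definition sig_vec :: "('a::{field_char_0,field_gcd} \<Rightarrow> 'a) \<Rightarrow> 'a poly \<Rightarrow> int \<Rightarrow> ('a poly fract)^'n \<Rightarrow> ('a poly fract)^'n" where
  "sig_vec s tt k v = (\<chi> i. ipow (sig_fract s tt) k (v$i))"

text \<open>Product in the Ore ring: (a sigma^i)(b sigma^j) = a sigma^i(b) sigma^(i+j)\<close>
definition op_mult :: "('a::{field_char_0,field_gcd} \<Rightarrow> 'a) \<Rightarrow> 'a poly \<Rightarrow> ('a,'n::finite) opmat \<Rightarrow> ('a,'n) opmat \<Rightarrow> ('a,'n) opmat" where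
  "op_mult s tt P Q = (\<lambda>k. \<Sum>i\<in>{i. P i \<noteq> 0}. P i ** sig_mat s tt i (Q (k - i)))"

definition op_one :: "('a::{field_char_0,field_gcd},'n::finite) opmat" where
  "op_one = (\<lambda>k. if k = 0 then mat 1 else 0)"

definition op_apply :: "('a::{field_char_0,field_gcd} \<Rightarrow> 'a) \<Rightarrow> 'a poly \<Rightarrow> ('a,'n::finite) opmat \<Rightarrow> ('a poly fract)^'n \<Rightarrow> ('a poly fract)^'n" where
  "op_apply s tt P y = (\<Sum>i\<in>{i. P i \<noteq> 0}. P i *v sig_vec s tt i y)"

definition unimodular :: "('a::{field_char_0,field_gcd} \<Rightarrow> 'a) \<Rightarrow> 'a poly \<Rightarrow> ('a,'n::finite) opmat \<Rightarrow> bool" where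
  "unimodular s tt P \<longleftrightarrow> finsupp P \<and>
     (\<exists>Q. finsupp Q \<and> op_mult s tt P Q = op_one \<and> op_mult s tt Q P = op_one)"

definition poly_op :: "nat \<Rightarrow> (nat \<Rightarrow> ('a::{field_char_0,field_gcd} poly)^'n^'n) \<Rightarrow> ('a,'n::finite) opmat" where
  "poly_op l A = (\<lambda>k. if 0 \<le> k \<and> k \<le> int l then fmat (A (nat k)) else 0)"

end

theory Submission
  imports Defs
begin


definition rhom :: "('b::comm_ring_1 \<Rightarrow> 'b) \<Rightarrow> bool" where
  "rhom f \<longleftrightarrow> (\<forall>x y. f (x + y) = f x + f y) \<and> (\<forall>x y. f (x * y) = f x * f y) \<and> f 1 = 1"

definition raut :: "('b::comm_ring_1 \<Rightarrow> 'b) \<Rightarrow> bool" where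
  "raut f \<longleftrightarrow> rhom f \<and> bij f"

lemma rhom_add: "rhom f \<Longrightarrow> f (x + y) = f x + f y" by (simp add: rhom_def)
lemma rhom_mult: "rhom f \<Longrightarrow> f (x * y) = f x * f y" by (simp add: rhom_def)
lemma rhom_1: "rhom f \<Longrightarrow> f 1 = 1" by (simp add: rhom_def)
lemma rhom_0: "rhom f \<Longrightarrow> f 0 = 0"
  using rhom_add[of f 0 0] by simp
lemma rhom_uminus: "rhom f \<Longrightarrow> f (- x) = - f x"
  using rhom_add[of f x "-x"] rhom_0[of f] by (metis add.commute add_right_cancel add.right_inverse)
lemma rhom_diff: "rhom f \<Longrightarrow> f (x - y) = f x - f y"
  using rhom_add[of f x "-y"] rhom_uminus[of f y] by simp
lemma rhom_sum: "rhom f \<Longrightarrow> f (sum g A) = sum (\<lambda>x. f (g x)) A"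
  by (induction A rule: infinite_finite_induct) (auto simp: rhom_0 rhom_add)
lemma rhom_prod: "rhom f \<Longrightarrow> f (prod g A) = prod (\<lambda>x. f (g x)) A"
  by (induction A rule: infinite_finite_induct) (auto simp: rhom_1 rhom_mult)
lemma rhom_power: "rhom f \<Longrightarrow> f (x ^ n) = f x ^ n"
  by (induction n) (auto simp: rhom_1 rhom_mult)
lemma rhom_dvd: "rhom f \<Longrightarrow> a dvd b \<Longrightarrow> f a dvd f b"
  by (metis dvd_def rhom_mult)
lemma rhom_comp: "rhom f \<Longrightarrow> rhom g \<Longrightarrow> rhom (f \<circ> g)"
  by (simp add: rhom_def)
lemma rhom_id: "rhom id" by (simp add: rhom_def)

lemma raut_inv: assumes "raut f" shows "raut (inv f)"
proof -
  have b: "bij f" and h: "rhom f" using assms by (auto simp: raut_def)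
  have fi: "f (inv f x) = x" for x using b by (simp add: bij_is_surj surj_f_inv_f)
  have if_: "inv f (f x) = x" for x using b by (simp add: bij_is_inj)
  have "inv f (x + y) = inv f x + inv f y" for x y
    by (metis fi if_ h rhom_add)
  moreover have "inv f (x * y) = inv f x * inv f y" for x y
    by (metis fi if_ h rhom_mult)
  moreover have "inv f 1 = 1" by (metis if_ h rhom_1)
  ultimately show ?thesis using b by (simp add: raut_def rhom_def bij_imp_bij_inv)
qed

lemma raut_funpow: "raut f \<Longrightarrow> raut (f ^^ n)"
proof (induction n)
  case 0 then show ?case by (simp add: raut_def rhom_def bij_id[unfolded id_def])
next
  case (Suc n)
  have e: "f ^^ Suc n = f \<circ> f^^n" by simp
  show ?case unfolding e
    using Suc rhom_comp[of f "f^^n"] bij_comp[of "f^^n" f] by (simp only: raut_def)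
qed

lemma raut_ipow: "raut f \<Longrightarrow> raut (ipow f k)"
  by (simp add: ipow_def raut_funpow raut_inv)

lemma ipow_Suc: assumes "bij f" shows "ipow f (k + 1) x = f (ipow f k x)"
proof (cases "0 \<le> k")
  case True
  then have "nat (k+1) = Suc (nat k)" by simp
  then show ?thesis using True by (simp add: ipow_def)
next
  case False
  then have "k = -1 \<or> k < -1" by auto
  then show ?thesis
  proof
    assume "k = -1" then show ?thesis using assms
      by (simp add: ipow_def bij_is_surj surj_f_inv_f)
  next
    assume k: "k < -1"
    then have "nat (-k) = Suc (nat (-(k+1)))" by simp
    then show ?thesis using k assms
      by (simp add: ipow_def bij_is_surj surj_f_inv_f del: funpow.simps)
         (simp add: funpow_Suc_right bij_is_surj surj_f_inv_f)
  qed
qed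

lemma ipow_pred: assumes "bij f" shows "ipow f (k - 1) x = inv f (ipow f k x)"
proof -
  have "ipow f k x = f (ipow f (k - 1) x)" using ipow_Suc[OF assms, of "k-1"] by simp
  then show ?thesis using assms by (simp add: bij_is_inj)
qed

lemma ipow_0 [simp]: "ipow f 0 x = x" by (simp add: ipow_def)
lemma ipow_1: "ipow f 1 x = f x" by (simp add: ipow_def)
lemma ipow_nat: "ipow f (int n) x = (f ^^ n) x" by (simp add: ipow_def)

lemma ipow_add: assumes "bij f" shows "ipow f a (ipow f b x) = ipow f (a + b) x"
proof (induction a rule: int_induct[where k=0])
  case base then show ?case by simp
next
  case (step1 i) then show ?case using ipow_Suc[OF assms] by (simp add: add.commute add.left_commute)
     (metis add.assoc add.commute)
next
  case (step2 i) then show ?case using ipow_pred[OF assms]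
    by (metis add.commute add_diff_eq)
qed

lemma ipow_inv_cancel: "bij f \<Longrightarrow> ipow f (-k) (ipow f k x) = x"
  by (simp add: ipow_add)
lemma ipow_inv_cancel': "bij f \<Longrightarrow> ipow f k (ipow f (-k) x) = x"
  by (simp add: ipow_add)


lemma ipow_invariant:
  assumes b: "bij f" and g: "\<And>x. g (f x) = g x"
  shows "g (ipow f k x) = g x"
proof -
  have gi: "g (inv f x) = g x" for x by (metis b g bij_is_surj surj_f_inv_f)
  have "g ((f ^^ n) x) = g x" for n x by (induction n) (auto simp: g)
  moreover have "g ((inv f ^^ n) x) = g x" for n x by (induction n) (auto simp: gi)
  ultimately show ?thesis by (simp add: ipow_def)
qed

lemma field_aut_rhom: "field_aut s \<Longrightarrow> rhom s"
  by (simp add: field_aut_def rhom_def)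
lemma field_aut_bij: "field_aut s \<Longrightarrow> bij s"
  by (simp add: field_aut_def)
lemma field_aut_0: "field_aut s \<Longrightarrow> s 0 = 0"
  by (simp add: field_aut_rhom rhom_0)
lemma field_aut_eq0: "field_aut s \<Longrightarrow> s x = 0 \<longleftrightarrow> x = 0"
  by (metis field_aut_0 field_aut_bij bij_is_inj injD)

lemma rhom_map_poly:
  fixes s :: "'a::comm_ring_1 \<Rightarrow> 'a"
  assumes h: "rhom s" shows "rhom (map_poly s)"
proof -
  have s0: "s 0 = 0" by (rule rhom_0[OF h])
  have "map_poly s (p + q) = map_poly s p + map_poly s q" for p q
    by (rule poly_eqI) (simp add: coeff_map_poly s0 rhom_add[OF h])
  moreover have "map_poly s (p * q) = map_poly s p * map_poly s q" for p q
    by (rule poly_eqI) (simp add: coeff_map_poly s0 coeff_mult rhom_sum[OF h] rhom_mult[OF h])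
  moreover have "map_poly s 1 = 1" by (simp add: rhom_1[OF h])
  ultimately show ?thesis by (simp add: rhom_def)
qed

lemma rhom_pcompose: "rhom (\<lambda>p. pcompose p q)"
  by (simp add: rhom_def pcompose_add pcompose_mult pcompose_1)

context
  fixes s :: "'a::{field_char_0,field_gcd} \<Rightarrow> 'a" and tt :: "'a poly"
  assumes fa: "field_aut s" and dtt: "degree tt = 1"
begin

lemma s0: "s 0 = 0" using fa by (rule field_aut_0)

lemma bij_map_poly_s: "bij (map_poly s)"
proof -
  have b: "bij s" using fa by (simp add: field_aut_bij)
  have i0: "inv s 0 = 0" by (metis b s0 bij_is_inj inv_f_f)
  have "map_poly s (map_poly (inv s) p) = p" for p
    by (simp add: map_poly_map_poly s0 i0 o_def b bij_is_surj surj_f_inv_f)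
  moreover have "map_poly (inv s) (map_poly s p) = p" for p
    by (simp add: map_poly_map_poly s0 i0 o_def b bij_is_inj)
  ultimately show ?thesis by (intro o_bij[of "map_poly (inv s)"]) (auto simp: fun_eq_iff)
qed

lemma bij_pcompose_tt: "bij (\<lambda>p. pcompose p tt)"
proof -
  define a where "a = coeff tt 0"
  define b where "b = coeff tt 1"
  have tt: "tt = [:a, b:]"
  proof (rule poly_eqI)
    fix n show "coeff tt n = coeff [:a, b:] n"
      using coeff_eq_0[of tt n] dtt
      by (cases n; cases "n - 1") (auto simp: a_def b_def)
  qed
  have b: "b \<noteq> 0" using dtt tt by auto
  define t' where "t' = [:- a / b, 1 / b:]"
  have e1: "pcompose t' tt = [:0, 1:]" using b
    by (simp add: t'_def tt pcompose_pCons algebra_simps)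
  have e2: "pcompose tt t' = [:0, 1:]" using b
    by (simp add: t'_def tt pcompose_pCons algebra_simps)
  have "pcompose (pcompose p t') tt = p" for p
    by (simp add: pcompose_assoc[symmetric] e1)
  moreover have "pcompose (pcompose p tt) t' = p" for p
    by (simp add: pcompose_assoc[symmetric] e2)
  ultimately show ?thesis by (intro o_bij[of "\<lambda>p. pcompose p t'"]) (auto simp: fun_eq_iff)
qed

lemma sig_poly_comp: "sig_poly s tt = (\<lambda>p. pcompose p tt) \<circ> map_poly s"
  by (simp add: fun_eq_iff sig_poly_def)

lemma raut_sig: "raut (sig_poly s tt)"
  unfolding sig_poly_comp raut_def
  using rhom_comp[OF rhom_pcompose rhom_map_poly[OF field_aut_rhom[OF fa]]]
    bij_comp[OF bij_map_poly_s bij_pcompose_tt] by simp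

lemma degree_sig: "degree (sig_poly s tt p) = degree p"
  using dtt by (simp add: sig_poly_def degree_pcompose degree_map_poly field_aut_eq0[OF fa])

lemma sig_const: "sig_poly s tt [:c:] = [:s c:]"
  by (simp add: sig_poly_def map_poly_pCons s0)

end


lemma rhom_inverse:
  fixes f :: "'b::field \<Rightarrow> 'b"
  assumes h: "rhom f" shows "f (inverse x) = inverse (f x)"
proof (cases "x = 0")
  case True then show ?thesis by (simp add: rhom_0[OF h])
next
  case False
  have "f x * f (inverse x) = 1" using False by (simp add: rhom_mult[OF h, symmetric] rhom_1[OF h])
  then show ?thesis by (metis inverse_unique)
qed

lemma rhom_divide:
  fixes f :: "'b::field \<Rightarrow> 'b"
  assumes h: "rhom f" shows "f (x / y) = f x / f y"
  by (simp add: divide_inverse rhom_mult[OF h] rhom_inverse[OF h])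

lemma snd_quot_nz: "snd (quot_of_fract x) \<noteq> 0"
  using quot_of_fract_in_normalized_fracts[of x] not_normalized_fracts_0_denom
  by (metis prod.collapse)

context
  fixes s :: "'a::{field_char_0,field_gcd} \<Rightarrow> 'a" and tt :: "'a poly"
  assumes fa: "field_aut s" and dtt: "degree tt = 1"
begin

abbreviation "sg \<equiv> sig_poly s tt"
abbreviation "SF \<equiv> sig_fract s tt"

lemma rs: "raut sg" using raut_sig[OF fa dtt] .
lemma rhs: "rhom sg" using rs by (simp add: raut_def)
lemma bs: "bij sg" using rs by (simp add: raut_def)
lemma sg_eq0: "sg x = 0 \<longleftrightarrow> x = 0"
  by (metis rhs rhom_0 bs bij_is_inj injD)

lemma SF_Fract: assumes "b \<noteq> 0" shows "SF (Fract a b) = Fract (sg a) (sg b)"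
proof -
  obtain a' b' where q: "quot_of_fract (Fract a b) = (a', b')" by (cases "quot_of_fract (Fract a b)")
  have b': "b' \<noteq> 0" using snd_quot_nz[of "Fract a b"] q by simp
  have "Fract a' b' = Fract a b" using Fract_quot_of_fract[of "Fract a b"] q by simp
  then have "a' * b = a * b'" using eq_fract(1)[OF b' assms] by simp
  then have "sg a' * sg b = sg a * sg b'" by (metis rhs rhom_mult)
  then have "Fract (sg a') (sg b') = Fract (sg a) (sg b)"
    using eq_fract(1) b' assms sg_eq0 by metis
  then show ?thesis by (simp add: sig_fract_def q)
qed

lemma SF_to_fract: "SF (to_fract a) = to_fract (sg a)"
  by (simp add: to_fract_def SF_Fract rhom_1[OF rhs])

lemma rhom_SF: "rhom SF"
proof -
  have "SF (x + y) = SF x + SF y" for x y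
  proof (induction x; induction y)
    fix a b c d :: "'a poly" assume "b \<noteq> 0" "d \<noteq> 0"
    then show "SF (Fract c d + Fract a b) = SF (Fract c d) + SF (Fract a b)"
      by (simp add: SF_Fract sg_eq0 rhom_add[OF rhs] rhom_mult[OF rhs])
  qed
  moreover have "SF (x * y) = SF x * SF y" for x y
  proof (induction x; induction y)
    fix a b c d :: "'a poly" assume "b \<noteq> 0" "d \<noteq> 0"
    then show "SF (Fract c d * Fract a b) = SF (Fract c d) * SF (Fract a b)"
      by (simp add: SF_Fract sg_eq0 rhom_add[OF rhs] rhom_mult[OF rhs])
  qed
  moreover have "SF 1 = 1" by (simp add: One_fract_def SF_Fract rhom_1[OF rhs])
  ultimately show ?thesis by (simp add: rhom_def)
qed

lemma SF_inj: "inj SF"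
proof (rule injI)
  fix x y assume e: "SF x = SF y"
  have "SF (x - y) = 0" by (simp add: rhom_diff[OF rhom_SF] e)
  then show "x = y"
  proof (induction "x - y" arbitrary: x y)
    case (Fract a b)
    then have "Fract (sg a) (sg b) = 0" by (metis SF_Fract)
    then have "sg a = 0" using Fract.hyps sg_eq0
      by (metis Zero_fract_def eq_fract(1) mult_1_right mult_zero_left one_neq_zero)
    then show ?case using Fract by (metis eq_fract(3) right_minus_eq sg_eq0 Zero_fract_def)
  qed
qed

lemma SF_surj: "surj SF"
proof -
  have "x \<in> range SF" for x
  proof (induction x)
    case (Fract a b)
    obtain a' where a': "a = sg a'" by (metis bs bij_is_surj surj_f_inv_f)
    obtain b' where b': "b = sg b'" by (metis bs bij_is_surj surj_f_inv_f)
    have "b' \<noteq> 0" using Fract b' sg_eq0 by simp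
    then show ?case using a' b' SF_Fract by (metis rangeI)
  qed
  then show ?thesis by auto
qed

lemma raut_SF: "raut SF" by (simp add: raut_def rhom_SF bij_def SF_inj SF_surj)
lemma bSF: "bij SF" by (simp add: bij_def SF_inj SF_surj)

lemma ipow_SF_to_fract: "ipow SF k (to_fract a) = to_fract (ipow sg k a)"
proof (induction k arbitrary: a rule: int_induct[where k=0])
  case base then show ?case by simp
next
  case (step1 i) then show ?case by (simp add: ipow_Suc bSF bs SF_to_fract)
next
  case (step2 i)
  have "SF (to_fract (inv sg x)) = to_fract x" for x
    by (simp add: SF_to_fract bs bij_is_surj surj_f_inv_f)
  then have "inv SF (to_fract x) = to_fract (inv sg x)" for x
    by (metis bSF bij_is_inj inv_f_f)
  then show ?case using step2 by (simp add: ipow_pred bSF bs)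
qed

lemma rhom_ipow_SF: "rhom (ipow SF k)"
  using raut_ipow[OF raut_SF] by (simp add: raut_def)
lemma rhom_ipow_sg: "rhom (ipow sg k)"
  using raut_ipow[OF rs] by (simp add: raut_def)

lemma ipow_SF_quot:
  "ipow SF k (to_fract a / to_fract b) = to_fract (ipow sg k a) / to_fract (ipow sg k b)"
  by (simp add: rhom_divide[OF rhom_ipow_SF] ipow_SF_to_fract)

end


lemma raut_inv_apply: "raut f \<Longrightarrow> inv f (f x) = x"
  by (simp add: raut_def bij_is_inj)
lemma raut_apply_inv: "raut f \<Longrightarrow> f (inv f x) = x"
  by (simp add: raut_def bij_is_surj surj_f_inv_f)
lemma raut_rhom: "raut f \<Longrightarrow> rhom f" by (simp add: raut_def)

lemma raut_dvd_iff: assumes "raut f" shows "f a dvd f b \<longleftrightarrow> a dvd b"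
  using rhom_dvd[OF raut_rhom[OF assms]] rhom_dvd[OF raut_rhom[OF raut_inv[OF assms]]]
    raut_inv_apply[OF assms] by metis

lemma raut_eq0: assumes "raut f" shows "f a = 0 \<longleftrightarrow> a = 0"
  by (metis assms raut_inv_apply raut_rhom rhom_0)

lemma raut_unit: assumes "raut f" shows "is_unit (f a) \<longleftrightarrow> is_unit a"
  using raut_dvd_iff[OF assms, of a 1] by (simp add: rhom_1[OF raut_rhom[OF assms]])

lemma raut_prime_elem:
  fixes f :: "'b::factorial_ring_gcd \<Rightarrow> 'b"
  assumes r: "raut f" and p: "prime_elem a" shows "prime_elem (f a)"
proof -
  have h: "rhom f" using r by (rule raut_rhom)
  have "f a \<noteq> 0" using p r by (simp add: raut_eq0 prime_elem_def)
  moreover have "\<not> is_unit (f a)" using p r by (simp add: raut_unit prime_elem_def)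
  moreover have "f a dvd x \<or> f a dvd y" if "f a dvd x * y" for x y
  proof -
    have "f a dvd f (inv f x * inv f y)" using that by (simp add: rhom_mult[OF h] raut_apply_inv[OF r])
    then have "a dvd inv f x * inv f y" by (simp add: raut_dvd_iff[OF r])
    then have "a dvd inv f x \<or> a dvd inv f y" using p prime_elem_dvd_mult_iff by blast
    then show ?thesis by (metis raut_dvd_iff[OF r] raut_apply_inv[OF r])
  qed
  ultimately show ?thesis by (simp add: prime_elem_def)
qed

lemma raut_multiplicity:
  fixes f :: "'b::factorial_ring_gcd \<Rightarrow> 'b"
  assumes r: "raut f" shows "multiplicity (f p) (f x) = multiplicity p x"
proof -
  have "f p ^ n dvd f x \<longleftrightarrow> p ^ n dvd x" for n
    by (simp add: rhom_power[OF raut_rhom[OF r], symmetric] raut_dvd_iff[OF r])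
  then show ?thesis unfolding multiplicity_def by simp
qed

lemma dvd_same_degree:
  fixes p q :: "'a::field poly"
  assumes "p dvd q" "q \<noteq> 0" "degree p = degree q"
  shows "\<exists>u. u \<noteq> 0 \<and> q = smult u p"
proof -
  obtain r where r: "q = p * r" using assms(1) by blast
  have "p \<noteq> 0" "r \<noteq> 0" using r assms(2) by auto
  then have "degree r = 0" using r assms(3) by (simp add: degree_mult_eq)
  then have "r = [:coeff r 0:]" by (rule degree_0_id[symmetric])
  then have "q = smult (coeff r 0) p" using r by (metis mult.commute mult_1 mult_smult_left smult_one)
  moreover have "coeff r 0 \<noteq> 0" using \<open>r \<noteq> 0\<close> \<open>r = [:coeff r 0:]\<close> by (metis pCons_0_0)
  ultimately show ?thesis by blast
qed

context
  fixes s :: "'a::{field_char_0,field_gcd} \<Rightarrow> 'a" and tt :: "'a poly" and isSigma :: bool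
  assumes ext: "PiSigma_ext s tt isSigma"
begin

lemma fa: "field_aut s" using ext by (simp add: PiSigma_ext_def)
lemma dtt: "degree tt = 1" using ext by (auto simp: PiSigma_ext_def split: if_splits)

abbreviation "sg' \<equiv> sig_poly s tt"

lemma rsg: "raut sg'" using raut_sig[OF fa dtt] .

lemma fixed_const: assumes "sg' q = q" shows "degree q = 0"
proof -
  have "sig_fract s tt (to_fract q) = to_fract q"
    using assms SF_to_fract[OF fa dtt] by simp
  then have "to_fract q \<in> (\<lambda>c. to_fract [:c:]) ` {c. s c = c}"
    using ext unfolding PiSigma_ext_def by blast
  then obtain c where "to_fract q = to_fract [:c:]" by blast
  then show ?thesis by simp
qed

definition NP :: "'a poly \<Rightarrow> bool" where
  "NP h \<longleftrightarrow> isSigma \<or> \<not> h dvd [:0, 1:]"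

lemma s_rhom: "rhom s" using fa by (rule field_aut_rhom)

lemma karr_core:
  assumes h: "prime_elem h" and np: "NP h" and n: "n > 0" and u: "u \<noteq> 0"
    and eq: "(sg' ^^ n) h = smult u h"
  shows False
proof -
  have rf: "raut (sg' ^^ j)" for j by (rule raut_funpow[OF rsg])
  have h0: "h \<noteq> 0" using h by (simp add: prime_elem_def)
  define g where "g = (\<Prod>j<n. (sg' ^^ j) h)"
  have "h * sg' g = (\<Prod>j<Suc n. (sg' ^^ j) h)"
    by (simp add: g_def rhom_prod[OF raut_rhom[OF rsg]] prod.lessThan_Suc_shift del: prod.lessThan_Suc)
  also have "\<dots> = g * smult u h" by (simp add: g_def eq)
  finally have "h * sg' g = h * smult u g" by (simp add: mult.commute mult.left_commute)
  then have sgg: "sg' g = smult u g" using h0 by (metis mult_cancel_left mult_smult_right)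
  have g0: "g \<noteq> 0" unfolding g_def using h0 raut_eq0[OF rf] by (simp add: prod_zero_iff)
  have hg: "h dvd g" unfolding g_def using n dvd_prodI[of "{..<n}" 0 "\<lambda>j. (sg'^^j) h"] by simp
  have dg: "degree g \<ge> 1"
  proof -
    have "degree h \<ge> 1" using h h0 is_unit_iff_degree[of h]
      by (simp add: prime_elem_def)
    then show ?thesis using dvd_imp_degree_le[OF hg g0] by simp
  qed
  show False
  proof (cases isSigma)
    case True
    then obtain beta where tt: "tt = [:beta, 1:]" using ext by (auto simp: PiSigma_ext_def)
    define c where "c = lead_coeff g"
    have c0: "c \<noteq> 0" using g0 by (simp add: c_def)
    have "lead_coeff (sg' g) = s c"
      using tt c0 by (simp add: sig_poly_def lead_coeff_comp lead_coeff_map_poly_nz field_aut_eq0[OF fa]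
          field_aut_0[OF fa] c_def)
    then have sc: "s c = u * c" using sgg u by (simp add: c_def)
    define q where "q = smult (1 / c) g"
    have qe: "q = [:1/c:] * g" by (simp add: q_def)
    have "sg' q = sg' [:1/c:] * sg' g" by (simp only: qe rhom_mult[OF raut_rhom[OF rsg]])
    also have "\<dots> = smult (s (1/c) * u) g"
      by (simp add: sig_const[OF fa dtt] sgg mult.commute)
    also have "s (1/c) * u = 1 / c" using sc c0 u
      by (simp add: rhom_divide[OF s_rhom] rhom_1[OF s_rhom])
    finally have "sg' q = q" by (simp add: q_def)
    moreover have "degree q = degree g" using c0 by (simp add: q_def)
    ultimately show False using fixed_const dg by simp
  next
    case False
    then obtain alpha where tt: "tt = [:0, alpha:]" and a0: "alpha \<noteq> 0" using ext by (auto simp: PiSigma_ext_def)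
    have cf: "coeff (sg' p) i = alpha ^ i * s (coeff p i)" for p i
      by (simp add: sig_poly_def tt coeff_pcompose_linear coeff_map_poly field_aut_0[OF fa])
    have key: "alpha ^ i * s (coeff g i) = u * coeff g i" for i
      using cf[of g i] sgg by simp
    define N where "N = degree g"
    define cN where "cN = coeff g N"
    have cN0: "cN \<noteq> 0" using g0 by (simp add: cN_def N_def)
    show False
    proof (cases "\<exists>i<N. coeff g i \<noteq> 0")
      case True
      then obtain i where i: "i < N" "coeff g i \<noteq> 0" by blast
      define ci where "ci = coeff g i"
      define q where "q = monom (cN / ci) (N - i)"
      have sN: "s cN = u * cN / alpha ^ N" using key[of N] a0 by (simp add: cN_def field_simps)
      have si: "s ci = u * ci / alpha ^ i" using key[of i] a0 by (simp add: ci_def field_simps)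
      have pw: "alpha ^ N = alpha ^ (N - i) * alpha ^ i" using i by (simp add: power_add[symmetric])
      have ci0: "ci \<noteq> 0" using i by (simp add: ci_def)
      have "alpha ^ (N - i) * s (cN / ci) = alpha ^ (N - i) * ((u * cN / alpha ^ N) / (u * ci / alpha ^ i))"
        by (simp only: rhom_divide[OF s_rhom] sN si)
      also have "\<dots> = cN / ci" using a0 u ci0 cN0 unfolding pw by (simp add: field_simps)
      finally have "alpha ^ (N - i) * s (cN / ci) = cN / ci" .
      then have "sg' q = q"
        by (intro poly_eqI) (auto simp: cf q_def coeff_monom field_aut_0[OF fa])
      moreover have "degree q = N - i" using cN0 i(2) by (simp add: q_def degree_monom_eq ci_def)
      ultimately show False using fixed_const i by simp
    next
      case False
      then have "g = monom cN N"
        by (intro poly_eqI) (auto simp: coeff_monom cN_def N_def intro: coeff_eq_0 dest: linorder_neqE_nat)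
      then have "g = smult cN ([:0,1:] ^ N)" by (simp add: monom_altdef)
      then have "h dvd [:0,1:] ^ N" using hg cN0 by (metis dvd_smult_cancel)
      then have "h dvd [:0,1:]" using h prime_elem_dvd_power by blast
      then show False using np \<open>\<not> isSigma\<close> unfolding NP_def by simp
    qed
  qed
qed

abbreviation "S \<equiv> ipow sg'"

lemma rS: "raut (S k)" by (rule raut_ipow[OF rsg])
lemma bsg: "bij sg'" using rsg by (simp add: raut_def)

lemma degree_S: "degree (S k p) = degree p"
  by (rule ipow_invariant[OF bsg]) (rule degree_sig[OF fa dtt])

lemma S_add: "S a (S b x) = S (a + b) x" by (rule ipow_add[OF bsg])

lemma NP_S: "NP (S k h) \<longleftrightarrow> NP h"
proof (cases isSigma)
  case True then show ?thesis unfolding NP_def by simp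
next
  case False
  then obtain alpha where tt: "tt = [:0, alpha:]" and a0: "alpha \<noteq> 0" using ext by (auto simp: PiSigma_ext_def)
  have st: "sg' [:0,1:] = smult alpha [:0,1:]"
    by (simp add: sig_poly_def tt map_poly_pCons field_aut_0[OF fa] rhom_1[OF s_rhom] pcompose_pCons)
  have "sg' x dvd [:0,1:] \<longleftrightarrow> x dvd [:0,1:]" for x
  proof -
    have "sg' x dvd [:0,1:] \<longleftrightarrow> sg' x dvd sg' [:0,1:]" using st a0
      by (metis dvd_smult_cancel dvd_smult)
    then show ?thesis by (simp add: raut_dvd_iff[OF rsg])
  qed
  then have "(S k x dvd [:0,1:]) = (x dvd [:0,1:])" for x
    by (intro ipow_invariant[OF bsg, where g="\<lambda>x. x dvd [:0,1:]"]) 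
  then show ?thesis by (simp add: NP_def)
qed

lemma aper:
  assumes h: "prime_elem h" and np: "NP h" and d: "S a h dvd S b h"
  shows "a = b"
proof (rule ccontr)
  assume ab: "a \<noteq> b"
  have h0: "h \<noteq> 0" using h by (simp add: prime_elem_def)
  have "S (-a) (S a h) dvd S (-a) (S b h)" using d by (simp add: raut_dvd_iff[OF rS])
  then have hd: "h dvd S (b - a) h" by (simp add: S_add)
  show False
  proof (cases "b - a > 0")
    case True
    have "S (b - a) h = (sg' ^^ nat (b - a)) h" using True by (simp add: ipow_def)
    then obtain u where "u \<noteq> 0" "(sg' ^^ nat (b-a)) h = smult u h"
      using dvd_same_degree[OF hd] raut_eq0[OF rS] h0 degree_S by metis
    then show False using karr_core[OF h np, of "nat (b-a)" u] True by simp
  next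
    case False
    then have pos: "a - b > 0" using ab by simp
    have "S (a - b) h dvd S (a - b) (S (b - a) h)" using hd by (simp add: raut_dvd_iff[OF rS])
    then have hd2: "S (a - b) h dvd h" by (simp add: S_add)
    have "S (a - b) h = (sg' ^^ nat (a - b)) h" using pos by (simp add: ipow_def)
    moreover obtain u where "u \<noteq> 0" "h = smult u (S (a - b) h)"
      using dvd_same_degree[OF hd2 h0] degree_S by metis
    ultimately have "smult (1/u) h = (sg' ^^ nat (a-b)) h" by (metis smult_smult smult_1_left field_class.field_divide_inverse mult_1 left_inverse)
    then have "(sg' ^^ nat (a-b)) h = smult (1/u) h" by simp
    then show False using karr_core[OF h np, of "nat (a-b)" "1/u"] pos \<open>u \<noteq> 0\<close> by simp
  qed
qed

end


lemma matrix_inv_left':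
  assumes "invertible A" shows "matrix_inv A ** A = mat 1"
  using assms unfolding invertible_def matrix_inv_def by (rule someI2_ex) auto

lemma sum_mv_left: "(sum f X) *v v = sum (\<lambda>x. f x *v v) X"
  by (induction X rule: infinite_finite_induct) (auto simp: matrix_vector_mult_add_rdistrib)
lemma sum_mv_right: "M *v (sum f X) = sum (\<lambda>x. M *v f x) X"
  by (induction X rule: infinite_finite_induct) (auto simp: matrix_vector_right_distrib)

context
  fixes s :: "'a::{field_char_0,field_gcd} \<Rightarrow> 'a" and tt :: "'a poly"
  assumes fa: "field_aut s" and dtt: "degree tt = 1"
begin

abbreviation "SV \<equiv> sig_vec s tt"
abbreviation "SM \<equiv> sig_mat s tt"

lemma rF: "rhom (ipow (sig_fract s tt) k)" by (rule rhom_ipow_SF[OF fa dtt])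
lemma bF: "bij (sig_fract s tt)" by (rule bSF[OF fa dtt])

lemma SV_add: "SV k (v + w) = SV k v + SV k w"
  by (simp add: sig_vec_def vec_eq_iff rhom_add[OF rF])
lemma SV_0: "SV k 0 = 0"
  by (simp add: sig_vec_def vec_eq_iff rhom_0[OF rF])
lemma SM_0: "SM k 0 = 0"
  by (simp add: sig_mat_def vec_eq_iff rhom_0[OF rF])
lemma SV_sum: "SV k (sum f X) = sum (\<lambda>x. SV k (f x)) X"
  by (induction X rule: infinite_finite_induct) (auto simp: SV_add SV_0)
lemma SV_mv: "SV k (M *v v) = SM k M *v SV k v"
  by (simp add: sig_vec_def sig_mat_def vec_eq_iff matrix_vector_mult_def rhom_sum[OF rF] rhom_mult[OF rF])
lemma SV_SV: "SV k (SV j v) = SV (k + j) v"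
  by (simp add: sig_vec_def vec_eq_iff ipow_add[OF bF])
lemma SV_0': "SV 0 v = v"
  by (simp add: sig_vec_def vec_eq_iff)

lemma op_apply_superset:
  assumes "finite F" "{i. P i \<noteq> 0} \<subseteq> F"
  shows "op_apply s tt P y = (\<Sum>i\<in>F. P i *v SV i y)"
  unfolding op_apply_def using assms by (intro sum.mono_neutral_left) auto

lemma op_apply_mult:
  assumes fP: "finsupp P" and fQ: "finsupp Q"
  shows "op_apply s tt (op_mult s tt P Q) y = op_apply s tt P (op_apply s tt Q y)"
proof -
  define SP where "SP = {i. P i \<noteq> 0}"
  define SQ where "SQ = {i. Q i \<noteq> 0}"
  have fSP: "finite SP" and fSQ: "finite SQ" using fP fQ by (auto simp: finsupp_def SP_def SQ_def)
  define T where "T = (\<lambda>(i,j). i + j) ` (SP \<times> SQ)"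
  have fT: "finite T" using fSP fSQ by (simp add: T_def)
  define R where "R = op_mult s tt P Q"
  have R: "R k = (\<Sum>i\<in>SP. P i ** SM i (Q (k - i)))" for k
    by (simp add: R_def op_mult_def SP_def)
  have supp: "{k. R k \<noteq> 0} \<subseteq> T"
  proof
    fix k assume "k \<in> {k. R k \<noteq> 0}"
    then have "R k \<noteq> 0" by simp
    then have "\<exists>i\<in>SP. P i ** SM i (Q (k - i)) \<noteq> 0"
      by (rule contrapos_np) (simp add: R)
    then obtain i where i: "i \<in> SP" "P i ** SM i (Q (k - i)) \<noteq> 0" by blast
    then have "Q (k - i) \<noteq> 0" by (auto simp: SM_0)
    then have "(i, k - i) \<in> SP \<times> SQ" using i by (simp add: SQ_def)
    then show "k \<in> T" unfolding T_def by (rule image_eqI[rotated]) simp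
  qed
  have "op_apply s tt R y = (\<Sum>k\<in>T. R k *v SV k y)"
    by (rule op_apply_superset[OF fT supp])
  also have "\<dots> = (\<Sum>k\<in>T. \<Sum>i\<in>SP. (P i ** SM i (Q (k - i))) *v SV k y)"
    by (simp add: R sum_mv_left)
  also have "\<dots> = (\<Sum>i\<in>SP. \<Sum>k\<in>T. (P i ** SM i (Q (k - i))) *v SV k y)"
    by (rule sum.swap)
  also have "\<dots> = (\<Sum>i\<in>SP. \<Sum>j\<in>SQ. (P i ** SM i (Q j)) *v SV (i + j) y)"
  proof (rule sum.cong[OF refl])
    fix i assume i: "i \<in> SP"
    have sub: "(\<lambda>j. i + j) ` SQ \<subseteq> T" using i by (auto simp: T_def)
    have "(\<Sum>k\<in>T. (P i ** SM i (Q (k - i))) *v SV k y)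
        = (\<Sum>k\<in>(\<lambda>j. i + j) ` SQ. (P i ** SM i (Q (k - i))) *v SV k y)"
    proof (rule sum.mono_neutral_right[OF fT sub], intro ballI)
      fix k assume "k \<in> T - (\<lambda>j. i + j) ` SQ"
      then have "Q (k - i) = 0" by (auto simp: SQ_def image_iff)
      then show "(P i ** SM i (Q (k - i))) *v SV k y = 0" by (simp add: SM_0)
    qed
    also have "\<dots> = (\<Sum>j\<in>SQ. (P i ** SM i (Q j)) *v SV (i + j) y)"
      by (subst sum.reindex) (auto simp: inj_on_def)
    finally show "(\<Sum>k\<in>T. (P i ** SM i (Q (k - i))) *v SV k y)
        = (\<Sum>j\<in>SQ. (P i ** SM i (Q j)) *v SV (i + j) y)" .
  qed
  also have "\<dots> = op_apply s tt P (op_apply s tt Q y)"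
    by (simp add: op_apply_def SP_def SQ_def SV_sum SV_mv SV_SV sum_mv_right matrix_vector_mul_assoc)
  finally show ?thesis by (simp add: R_def)
qed

lemma finsupp_poly_op: "finsupp (poly_op l A)"
  unfolding finsupp_def poly_op_def
  by (rule finite_subset[of _ "{0..int l}"]) auto

lemma op_apply_poly_op:
  "op_apply s tt (poly_op l A) y = (\<Sum>k\<in>{0..int l}. fmat (A (nat k)) *v SV k y)"
  by (subst op_apply_superset[of "{0..int l}"]) (auto simp: poly_op_def intro: sum.cong)

end

lemma to_fract_prod: "to_fract (prod f A) = prod (\<lambda>x. to_fract (f x)) A"
  by (induction A rule: infinite_finite_induct) auto

lemma to_fract_of_nat: "to_fract (of_nat n) = of_nat n"
  by (induction n) auto

lemma to_fract_of_int: "to_fract (of_int z) = of_int z"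
proof (cases z rule: int_cases)
  case (nonneg n) then show ?thesis using to_fract_of_nat[of n] by simp
next
  case (neg n) then show ?thesis using to_fract_of_nat[of "Suc n"] by (simp del: of_nat_Suc)
qed

lemma det_fmat: "det (fmat M) = to_fract (det M)"
  by (simp add: det_def fmat_def to_fract_prod to_fract_of_int)


definition clears :: "'b::idom \<Rightarrow> ('b fract)^'n \<Rightarrow> bool" where
  "clears c w \<longleftrightarrow> (\<forall>i. to_fract c * w$i \<in> range to_fract)"

lemma range_tf_add: "x \<in> range to_fract \<Longrightarrow> y \<in> range to_fract \<Longrightarrow> x + y \<in> range to_fract"
  by (auto simp: image_iff) (metis to_fract_add)
lemma range_tf_diff: "x \<in> range to_fract \<Longrightarrow> y \<in> range to_fract \<Longrightarrow> x - y \<in> range to_fract"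
  by (auto simp: image_iff) (metis to_fract_diff)
lemma range_tf_mult: "x \<in> range to_fract \<Longrightarrow> y \<in> range to_fract \<Longrightarrow> x * y \<in> range to_fract"
  by (auto simp: image_iff) (metis to_fract_mult)
lemma range_tf_sum: "(\<And>x. x \<in> X \<Longrightarrow> f x \<in> range to_fract) \<Longrightarrow> sum f X \<in> range to_fract"
  by (induction X rule: infinite_finite_induct) (auto intro: range_tf_add image_eqI[of 0 to_fract 0])

lemma clears_mono: assumes "clears c w" "c dvd c'" shows "clears c' w"
proof -
  obtain k where k: "c' = c * k" using assms(2) by blast
  have "to_fract c' * w$i = to_fract k * (to_fract c * w$i)" for i by (simp add: k mult_ac)
  then show ?thesis using assms(1) unfolding clears_def by (metis range_tf_mult rangeI)
qed

lemma clears_add: "clears c v \<Longrightarrow> clears c w \<Longrightarrow> clears c (v + w)"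
  by (simp add: clears_def distrib_left range_tf_add)
lemma clears_diff: "clears c v \<Longrightarrow> clears c w \<Longrightarrow> clears c (v - w)"
  by (simp add: clears_def right_diff_distrib range_tf_diff)
lemma clears_sum: "(\<And>x. x \<in> X \<Longrightarrow> clears c (f x)) \<Longrightarrow> clears c (sum f X)"
  by (simp add: clears_def sum_component sum_distrib_left range_tf_sum)
lemma clears_fvec: "clears c (fvec b)"
  by (simp add: clears_def fvec_def) (metis to_fract_mult rangeI)
lemma clears_fmat: assumes "clears c w" shows "clears c (fmat M *v w)"
proof -
  have "to_fract c * (fmat M *v w)$i = (\<Sum>j\<in>UNIV. to_fract (M$i$j) * (to_fract c * w$j))" for i
    by (simp add: matrix_vector_mult_def fmat_def sum_distrib_left mult_ac)
  note eq = this
  show ?thesis unfolding clears_def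
  proof
    fix i
    have "(\<Sum>j\<in>UNIV. to_fract (M$i$j) * (to_fract c * w$j)) \<in> range to_fract"
      using assms unfolding clears_def by (rule_tac range_tf_sum, rule_tac range_tf_mult[OF rangeI]) simp
    then show "to_fract c * (fmat M *v w)$i \<in> range to_fract" by (simp only: eq)
  qed
qed
lemma clears_inv:
  assumes "common_denom m Mi" "clears c w" shows "clears (m * c) (Mi *v w)"
proof -
  have "to_fract (m * c) * (Mi *v w)$i = (\<Sum>j\<in>UNIV. (to_fract m * Mi$i$j) * (to_fract c * w$j))" for i
    by (simp add: matrix_vector_mult_def sum_distrib_left mult_ac)
  note eq = this
  show ?thesis unfolding clears_def
  proof
    fix i
    have "(\<Sum>j\<in>UNIV. (to_fract m * Mi$i$j) * (to_fract c * w$j)) \<in> range to_fract"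
      using assms unfolding clears_def common_denom_def by (auto intro!: range_tf_sum range_tf_mult[of "_ * _" "_ * _"])
    then show "to_fract (m * c) * (Mi *v w)$i \<in> range to_fract" by (simp only: eq)
  qed
qed

lemma clears_quot:
  fixes z :: "('b::idom)^'n"
  assumes "d dvd e" "d \<noteq> 0"
  shows "clears e (\<chi> i. to_fract (z$i) / to_fract d)"
proof -
  obtain k where k: "e = d * k" using assms by blast
  have "to_fract e * (to_fract (z$i) / to_fract d) = to_fract (k * z$i)" for i
    using assms(2) by (simp add: k)
  note h = this
  show ?thesis unfolding clears_def vec_lambda_beta using h by (metis rangeI)
qed

lemma reduced_dvd:
  fixes d c :: "'a::{field_char_0,field_gcd} poly" and z :: "('a poly)^'n"
  assumes cl: "clears c (\<chi> i. to_fract (z$i) / to_fract d)" and d0: "d \<noteq> 0"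
    and red: "\<forall>g. g dvd d \<and> (\<forall>i. g dvd z$i) \<longrightarrow> is_unit g"
  shows "d dvd c"
proof -
  have dz: "d dvd c * z$i" for i
  proof -
    obtain q where e: "to_fract c * (to_fract (z$i) / to_fract d) = to_fract q"
      using cl unfolding clears_def by (metis (no_types, lifting) imageE vec_lambda_beta)
    have "to_fract c * to_fract (z$i) = to_fract q * to_fract d"
      using e d0 by (simp add: field_simps)
    then have "to_fract (c * z$i) = to_fract (q * d)" by simp
    then have "c * z$i = q * d" by (simp only: to_fract_eq_iff)
    then show ?thesis by (metis dvd_triv_right)
  qed
  define X where "X = insert d (range (\<lambda>i. z$i))"
  have "d dvd Gcd ((*) c ` X)" using dz by (auto simp: X_def intro!: Gcd_greatest)
  also have "\<dots> = normalize (c * Gcd X)" by (rule Gcd_mult)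
  finally have dc: "d dvd c * Gcd X" by simp
  have "Gcd X dvd d" by (rule Gcd_dvd) (simp add: X_def)
  moreover have "\<forall>i. Gcd X dvd z$i" by (intro allI Gcd_dvd) (simp add: X_def)
  ultimately have "is_unit (Gcd X)" using red by blast
  with dc show ?thesis by (metis dvd_mult_unit_iff)
qed

context
  fixes s :: "'a::{field_char_0,field_gcd} \<Rightarrow> 'a" and tt :: "'a poly"
  assumes fa: "field_aut s" and dtt: "degree tt = 1"
begin

abbreviation "SP \<equiv> ipow (sig_poly s tt)"

lemma rSP: "raut (SP k)" by (rule raut_ipow[OF rs[OF fa dtt]])

lemma SV_quot: fixes z :: "('a poly)^'n" shows "sig_vec s tt k (\<chi> i. to_fract (z$i) / to_fract d)
   = (\<chi> i. to_fract (SP k (z$i)) / to_fract (SP k d))"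
  by (simp add: sig_vec_def ipow_SF_quot[OF fa dtt])

lemma red_SP:
  fixes z :: "('a poly)^'n"
  assumes red: "\<forall>g. g dvd d \<and> (\<forall>i. g dvd z$i) \<longrightarrow> is_unit g"
  shows "\<forall>g. g dvd SP k d \<and> (\<forall>i. g dvd SP k (z$i)) \<longrightarrow> is_unit g"
proof (intro allI impI)
  fix g assume "g dvd SP k d \<and> (\<forall>i. g dvd SP k (z$i))"
  then have "SP (-k) g dvd d \<and> (\<forall>i. SP (-k) g dvd z$i)"
    by (metis raut_dvd_iff[OF rSP] ipow_inv_cancel'[OF bs[OF fa dtt]])
  then have "is_unit (SP (-k) g)" using red by blast
  then show "is_unit g" by (simp add: raut_unit[OF rSP])
qed

lemma solve_top:
  fixes M :: "('a poly fract)^'n::finite^'n" and z :: "('a poly)^'n"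
  assumes inv: "invertible M" and cd: "common_denom c (matrix_inv M)"
    and eq: "M *v sig_vec s tt j y + w = fvec b" and clw: "clears L w"
    and y: "y = (\<chi> i. to_fract (z$i) / to_fract d)" and d0: "d \<noteq> 0"
    and red: "\<forall>g. g dvd d \<and> (\<forall>i. g dvd z$i) \<longrightarrow> is_unit g"
  shows "SP j d dvd c * L"
proof -
  have "sig_vec s tt j y = matrix_inv M *v (fvec b - w)"
    using eq by (metis add_diff_cancel_right' matrix_vector_mul_assoc matrix_inv_left'[OF inv] matrix_vector_mul_lid)
  moreover have "clears (c * L) (matrix_inv M *v (fvec b - w))"
    by (intro clears_inv[OF cd] clears_diff clears_fvec clw)
  ultimately have cl: "clears (c * L) (\<chi> i. to_fract ((\<chi> i. SP j (z$i))$i) / to_fract (SP j d))"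
    by (simp add: y SV_quot)
  show ?thesis
    by (rule reduced_dvd[OF cl]) (use d0 raut_eq0[OF rSP] red_SP[OF red] in auto)
qed

lemma clears_shift:
  fixes z :: "('a poly)^'n::finite"
  assumes y: "y = (\<chi> i. to_fract (z$i) / to_fract d)" and d0: "d \<noteq> 0"
    and "k \<in> K" and "finite K"
  shows "clears (Lcm ((\<lambda>k. SP k d) ` K)) (fmat N *v sig_vec s tt k y)"
  unfolding y SV_quot
  by (intro clears_fmat clears_quot[where z="\<chi> i. SP k (z$i)", simplified])
     (use assms raut_eq0[OF rSP] in \<open>auto intro: dvd_Lcm\<close>)

end


context
  fixes s :: "'a::{field_char_0,field_gcd} \<Rightarrow> 'a" and tt :: "'a poly"
  assumes fa: "field_aut s" and dtt: "degree tt = 1"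
begin

lemma split_top:
  fixes B :: "nat \<Rightarrow> ('a poly)^'n::finite^'n" and y :: "('a poly fract)^'n"
  assumes "op_apply s tt (poly_op l B) y = fvec b"
  shows "fmat (B l) *v sig_vec s tt (int l) y
     + (\<Sum>k\<in>{0..<int l}. fmat (B (nat k)) *v sig_vec s tt k y) = fvec b"
proof -
  have "{0..int l} = insert (int l) {0..<int l}" by auto
  then show ?thesis using assms by (simp add: op_apply_poly_op[OF fa dtt])
qed

lemma split_bot:
  fixes B :: "nat \<Rightarrow> ('a poly)^'n::finite^'n" and y :: "('a poly fract)^'n"
  assumes "op_apply s tt (poly_op l B) y = fvec b"
  shows "fmat (B 0) *v sig_vec s tt 0 y
     + (\<Sum>k\<in>{1..int l}. fmat (B (nat k)) *v sig_vec s tt k y) = fvec b"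
proof -
  have "{0..int l} = insert 0 {1..int l}" by auto
  then show ?thesis using assms by (simp add: op_apply_poly_op[OF fa dtt])
qed

lemma invertible_fmat: "det M \<noteq> 0 \<Longrightarrow> invertible (fmat M)"
  by (simp add: invertible_det_nz det_fmat)

lemma D1:
  fixes A :: "nat \<Rightarrow> ('a poly)^'n::finite^'n" and z :: "('a poly)^'n"
  assumes detA: "det (A l) \<noteq> 0"
    and m: "common_denom m (matrix_inv (fmat (A l)))"
    and d: "d \<noteq> 0"
    and red: "\<forall>c. c dvd d \<and> (\<forall>i. c dvd z$i) \<longrightarrow> is_unit c"
    and sol: "op_apply s tt (poly_op l A) ((\<chi> i. to_fract (z$i) / to_fract d)) = fvec b"
  shows "ipow (sig_poly s tt) (int l) d dvd m * Lcm ((\<lambda>k. ipow (sig_poly s tt) k d) ` {0..<int l})"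
  by (rule solve_top[OF fa dtt invertible_fmat[OF detA] m split_top[OF sol] _ refl d red])
     (intro clears_sum clears_shift[OF fa dtt refl d], auto)

lemma D2:
  fixes A :: "nat \<Rightarrow> ('a poly)^'n::finite^'n" and z :: "('a poly)^'n"
    and At :: "nat \<Rightarrow> ('a poly)^'n^'n" and P :: "('a,'n) opmat"
  assumes unimod: "unimodular s tt P"
    and PA: "op_mult s tt P (poly_op l A) = poly_op lt At"
    and Pb: "op_apply s tt P (fvec b) = fvec bt"
    and detAt: "det (At 0) \<noteq> 0"
    and p: "common_denom p (matrix_inv (fmat (At 0)))"
    and d: "d \<noteq> 0"
    and red: "\<forall>c. c dvd d \<and> (\<forall>i. c dvd z$i) \<longrightarrow> is_unit c"
    and sol: "op_apply s tt (poly_op l A) ((\<chi> i. to_fract (z$i) / to_fract d)) = fvec b"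
  shows "d dvd p * Lcm ((\<lambda>k. ipow (sig_poly s tt) k d) ` {1..int lt})"
proof -
  define y where "y = (\<chi> i. to_fract (z$i) / to_fract d)"
  have fP: "finsupp P" using unimod by (simp add: unimodular_def)
  have "op_apply s tt (poly_op lt At) y = op_apply s tt P (op_apply s tt (poly_op l A) y)"
    unfolding PA[symmetric] by (rule op_apply_mult[OF fa dtt fP finsupp_poly_op[OF fa dtt]])
  also have "\<dots> = fvec bt" using sol Pb by (simp add: y_def)
  finally have sol2: "op_apply s tt (poly_op lt At) y = fvec bt" .
  have "ipow (sig_poly s tt) 0 d dvd p * Lcm ((\<lambda>k. ipow (sig_poly s tt) k d) ` {1..int lt})"
    by (rule solve_top[OF fa dtt invertible_fmat[OF detAt] p split_bot[OF sol2] _ y_def d red])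
       (intro clears_sum clears_shift[OF fa dtt y_def d], auto)
  then show ?thesis by simp
qed

end


lemma mult_Lcm:
  fixes X :: "'a::{field_char_0,field_gcd} poly set"
  assumes g: "prime_elem g" and fX: "finite X" and X0: "0 \<notin> X"
  shows "multiplicity g (Lcm X) = 0 \<or> (\<exists>x\<in>X. multiplicity g (Lcm X) \<le> multiplicity g x)"
proof (cases "X = {}")
  case True then show ?thesis by simp
next
  case False
  have gu: "\<not> is_unit g" using g by (simp add: prime_elem_def)
  define e where "e = Max (multiplicity g ` X)"
  have "e \<in> multiplicity g ` X" unfolding e_def using fX False by (intro Max_in) auto
  then obtain x0 where x0: "x0 \<in> X" "e = multiplicity g x0" by blast
  define r where "r x = x div g ^ multiplicity g x" for x
  have xr: "x = g ^ multiplicity g x * r x" for x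
    by (simp add: r_def multiplicity_dvd)
  have nr: "\<not> g dvd r x" if "x \<in> X" for x
    using multiplicity_decompose[of x g] that X0 gu by (auto simp: r_def)
  have r0: "r x \<noteq> 0" if "x \<in> X" for x using that X0 xr[of x] by (metis mult_zero_right)
  define Y where "Y = g ^ e * prod r X"
  have "x dvd Y" if "x \<in> X" for x
  proof -
    have "multiplicity g x \<le> e" using that fX by (simp add: e_def)
    then have "g ^ multiplicity g x dvd g ^ e" by (rule le_imp_power_dvd)
    moreover have "r x dvd prod r X" using that fX by (intro dvd_prodI)
    ultimately show ?thesis by (subst xr) (simp add: Y_def mult_dvd_mono)
  qed
  then have LY: "Lcm X dvd Y" by (rule Lcm_least)
  have Y0: "Y \<noteq> 0" using g r0 fX by (simp add: Y_def prime_elem_def)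
  have p0: "prod r X \<noteq> 0" using r0 fX by simp
  have g0: "g \<noteq> 0" using g by (simp add: prime_elem_def)
  have mp: "multiplicity g (prod r X) = (\<Sum>x\<in>X. multiplicity g (r x))"
    by (rule prime_elem_multiplicity_prod_distrib[OF g]) (use r0 fX in auto)
  have "multiplicity g Y = e + (\<Sum>x\<in>X. multiplicity g (r x))"
    unfolding Y_def using g g0 p0 by (simp add: prime_elem_multiplicity_mult_distrib mp)
  also have "(\<Sum>x\<in>X. multiplicity g (r x)) = 0"
    using nr by (simp add: not_dvd_imp_multiplicity_0)
  finally have mY: "multiplicity g Y = e" by simp
  have "multiplicity g (Lcm X) \<le> e" using dvd_imp_multiplicity_le[OF LY Y0, of g] mY by simp
  then show ?thesis using x0 by auto
qed

lemma chain_up: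
  fixes e M :: "int \<Rightarrow> nat"
  assumes V: "\<And>k. e k \<le> M k \<or> (\<exists>i>0. e k \<le> M k + e (k + i))"
    and K: "\<And>k. e k > 0 \<Longrightarrow> k \<le> K"
  shows "e k \<le> (\<Sum>j\<in>{k..K}. M j)"
proof (induction "nat (K - k)" arbitrary: k rule: less_induct)
  case less
  show ?case
  proof (cases "e k = 0")
    case True then show ?thesis by simp
  next
    case False
    then have kK: "k \<le> K" using K by simp
    have split: "(\<Sum>j\<in>{k..K}. M j) = M k + (\<Sum>j\<in>{k+1..K}. M j)"
    proof -
      have "{k..K} = insert k {k+1..K}" using kK by auto
      then show ?thesis by simp
    qed
    from V[of k] show ?thesis
    proof
      assume "e k \<le> M k" then show ?thesis using split by simp
    next
      assume "\<exists>i>0. e k \<le> M k + e (k + i)"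
      then obtain i where i: "i > 0" "e k \<le> M k + e (k + i)" by blast
      show ?thesis
      proof (cases "e (k + i) = 0")
        case True then show ?thesis using i split by simp
      next
        case False
        then have "k + i \<le> K" using K by simp
        then have "nat (K - (k + i)) < nat (K - k)" using i by simp
        then have "e (k + i) \<le> (\<Sum>j\<in>{k+i..K}. M j)" by (rule less)
        also have "\<dots> \<le> (\<Sum>j\<in>{k+1..K}. M j)" using i by (intro sum_mono2) auto
        finally show ?thesis using i split by simp
      qed
    qed
  qed
qed

lemma chain_down:
  fixes e M :: "int \<Rightarrow> nat"
  assumes V: "\<And>k. e k \<le> M k \<or> (\<exists>i>0. e k \<le> M k + e (k - i))"
    and B: "\<And>k. e k > 0 \<Longrightarrow> B \<le> k"
  shows "e k \<le> (\<Sum>j\<in>{B..k}. M j)"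
proof (induction "nat (k - B)" arbitrary: k rule: less_induct)
  case less
  show ?case
  proof (cases "e k = 0")
    case True then show ?thesis by simp
  next
    case False
    then have kK: "B \<le> k" using B by simp
    have split: "(\<Sum>j\<in>{B..k}. M j) = M k + (\<Sum>j\<in>{B..k-1}. M j)"
    proof -
      have "{B..k} = insert k {B..k-1}" using kK by auto
      then show ?thesis by simp
    qed
    from V[of k] show ?thesis
    proof
      assume "e k \<le> M k" then show ?thesis using split by simp
    next
      assume "\<exists>i>0. e k \<le> M k + e (k - i)"
      then obtain i where i: "i > 0" "e k \<le> M k + e (k - i)" by blast
      show ?thesis
      proof (cases "e (k - i) = 0")
        case True then show ?thesis using i split by simp
      next
        case False
        then have "B \<le> k - i" using B by simp
        then have "nat ((k - i) - B) < nat (k - B)" using i by simp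
        then have "e (k - i) \<le> (\<Sum>j\<in>{B..k-i}. M j)" by (rule less)
        also have "\<dots> \<le> (\<Sum>j\<in>{B..k-1}. M j)" using i by (intro sum_mono2) auto
        finally show ?thesis using i split by simp
      qed
    qed
  qed
qed

lemma per_ap:
  fixes a :: "'a::{field_char_0,field_gcd} poly"
  shows "a = per isSigma a * ap isSigma a"
proof -
  have "per isSigma a dvd a"
    using order_1[of 0 a] by (simp add: per_def monom_altdef)
  then show ?thesis by (simp add: ap_def)
qed

lemma per_pow: "\<not> isSigma \<Longrightarrow> per isSigma a = [:0,1:] ^ order 0 a"
  by (simp add: per_def monom_altdef)

lemma ap_not_t:
  fixes a :: "'a::{field_char_0,field_gcd} poly"
  assumes "a \<noteq> 0" "\<not> isSigma" shows "\<not> [:0,1:] dvd ap isSigma a"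
proof
  assume "[:0,1:] dvd ap isSigma a"
  then have "per isSigma a * [:0,1:] dvd per isSigma a * ap isSigma a" by (rule mult_dvd_mono[OF dvd_refl])
  then have "[:-0,1:] ^ Suc (order 0 a) dvd a" using per_ap[of a isSigma] assms(2)
    by (simp add: per_pow mult.commute)
  then show False using order_2[OF assms(1)] by blast
qed

lemma ap_nz: fixes a :: "'a::{field_char_0,field_gcd} poly" shows "a \<noteq> 0 \<Longrightarrow> ap isSigma a \<noteq> 0"
  by (metis mult_zero_right per_ap)

lemma ap_dvd: fixes a :: "'a::{field_char_0,field_gcd} poly" shows "ap isSigma a dvd a"
  by (metis dvd_triv_right per_ap)


context
  fixes s :: "'a::{field_char_0,field_gcd} \<Rightarrow> 'a" and tt :: "'a poly" and isSigma :: bool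
  assumes ext: "PiSigma_ext s tt isSigma"
begin

abbreviation "S9 \<equiv> ipow (sig_poly s tt)"

lemma fa9: "field_aut s" by (rule fa[OF ext])
lemma dtt9: "degree tt = 1" by (rule dtt[OF ext])
lemma rS9: "raut (S9 k)" by (rule rS[OF ext])
lemma S9_add: "S9 a (S9 b x) = S9 (a + b) x" by (rule S_add[OF ext])

lemma mult_transfer: "multiplicity (S9 a x) (S9 b y) = multiplicity (S9 (a - b) x) y"
proof -
  have "multiplicity (S9 a x) (S9 b y) = multiplicity (S9 (-b) (S9 a x)) (S9 (-b) (S9 b y))"
    by (rule raut_multiplicity[OF rS9, symmetric])
  then show ?thesis by (simp add: S9_add)
qed

lemma mult_transfer_l: "multiplicity x (S9 b y) = multiplicity (S9 (- b) x) y"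
  using mult_transfer[of 0 x b y] by simp
lemma mult_transfer_r: "multiplicity (S9 a x) y = multiplicity (S9 a x) (S9 0 y)"
  by simp

lemma S9_prime: "prime_elem x \<Longrightarrow> prime_elem (S9 k x)"
  by (rule raut_prime_elem[OF rS9])

lemma prime_deg: fixes g :: "'a poly" shows "prime_elem g \<Longrightarrow> degree g \<ge> 1"
proof -
  assume g: "prime_elem g"
  then have "g \<noteq> 0" "\<not> is_unit g" by (auto simp: prime_elem_def)
  then have "degree g \<noteq> 0" using is_unit_iff_degree[of g] by blast
  then show ?thesis by simp
qed

lemma NP_ap:
  fixes a g :: "'a poly"
  assumes a: "a \<noteq> 0" and g: "prime_elem g" and dv: "g dvd ap isSigma a"
  shows "NP isSigma g"
proof (cases isSigma)
  case True then show ?thesis using NP_def[OF ext, of g] by simp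
next
  case False
  show ?thesis unfolding NP_def[OF ext]
  proof (rule disjI2, rule notI)
    assume gt: "g dvd [:0,1:]"
    have "degree g = degree ([:0,1::'a:])" using prime_deg[OF g] dvd_imp_degree_le[OF gt] by simp
    then obtain u where "u \<noteq> 0" "[:0,1:] = smult u g" using dvd_same_degree[OF gt] by auto
    then have "[:0,1:] dvd ap isSigma a" using dv smult_dvd by metis
    then show False using ap_not_t[OF a False] by blast
  qed
qed

lemma not_dvd_S_per:
  assumes g: "prime_elem g" and np: "NP isSigma g" and dv: "g dvd S9 k (per isSigma a)"
  shows False
proof (cases isSigma)
  case True
  then have "g dvd 1" using dv by (simp add: per_def rhom_1[OF raut_rhom[OF rS9]])
  then show False using g by (simp add: prime_elem_def)
next
  case False
  then have "g dvd (S9 k [:0,1:]) ^ order 0 a" using dv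
    by (simp add: per_pow rhom_power[OF raut_rhom[OF rS9]])
  then have "g dvd S9 k [:0,1:]" using g prime_elem_dvd_power by blast
  then have "S9 (-k) g dvd [:0,1:]"
    by (metis raut_dvd_iff[OF rS9] ipow_inv_cancel'[OF bsg[OF ext]])
  moreover have "NP isSigma (S9 (-k) g)" using NP_S[OF ext] np by simp
  ultimately show False using False unfolding NP_def[OF ext] by simp
qed

lemma dvd_S_ap:
  assumes g: "prime_elem g" and np: "NP isSigma g" and dv: "g dvd S9 k a"
  shows "g dvd S9 k (ap isSigma a)"
proof -
  have "S9 k a = S9 k (per isSigma a) * S9 k (ap isSigma a)"
    by (subst per_ap[of a isSigma]) (simp add: rhom_mult[OF raut_rhom[OF rS9]])
  then have "g dvd S9 k (per isSigma a) \<or> g dvd S9 k (ap isSigma a)"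
    using dv g prime_elem_dvd_mult_iff by metis
  then show ?thesis using not_dvd_S_per[OF g np] by blast
qed

lemma spread_S: "(sig_poly s tt ^^ k) b = S9 (int k) b"
  by (simp add: ipow_def)

lemma spread_finite:
  assumes a0: "a \<noteq> 0" and b0: "b \<noteq> 0" and NPa: "\<And>g. prime_elem g \<Longrightarrow> g dvd a \<Longrightarrow> NP isSigma g"
  shows "finite (spread s tt a b)"
proof -
  define Sp where "Sp = spread s tt a b"
  have ex: "\<exists>g. prime g \<and> g dvd a \<and> g dvd S9 (int k) b" if "k \<in> Sp" for k
  proof -
    have dg: "degree (gcd a (S9 (int k) b)) \<noteq> 0" using that by (simp add: Sp_def spread_def spread_S)
    have g0: "gcd a (S9 (int k) b) \<noteq> 0" using a0 by simp
    have nu: "\<not> is_unit (gcd a (S9 (int k) b))" using is_unit_iff_degree[OF g0] dg by simp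
    obtain g where "prime g" "g dvd gcd a (S9 (int k) b)" by (rule prime_divisorE[OF g0 nu])
    then show ?thesis by auto
  qed
  define G where "G k = (SOME g. prime g \<and> g dvd a \<and> g dvd S9 (int k) b)" for k
  have G: "prime (G k) \<and> G k dvd a \<and> G k dvd S9 (int k) b" if "k \<in> Sp" for k
    unfolding G_def by (rule someI_ex[OF ex[OF that]])
  define phi where "phi k = (G k, normalize (S9 (- int k) (G k)))" for k
  have sub: "phi ` Sp \<subseteq> prime_factors a \<times> prime_factors b"
  proof
    fix x assume "x \<in> phi ` Sp"
    then obtain k where k: "k \<in> Sp" "x = phi k" by blast
    have pe: "prime_elem (S9 (- int k) (G k))" using G[OF k(1)] S9_prime by (simp add: prime_def)
    have "S9 (- int k) (G k) dvd S9 (- int k) (S9 (int k) b)"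
      using G[OF k(1)] by (simp add: raut_dvd_iff[OF rS9])
    then have "S9 (- int k) (G k) dvd b" by (simp add: S9_add)
    then show "x \<in> prime_factors a \<times> prime_factors b"
      using G[OF k(1)] pe a0 b0 by (simp add: k(2) phi_def in_prime_factors_iff)
  qed
  have "inj_on phi Sp"
  proof (rule inj_onI)
    fix k1 k2 assume k: "k1 \<in> Sp" "k2 \<in> Sp" "phi k1 = phi k2"
    then have e1: "G k1 = G k2" and e2: "normalize (S9 (- int k1) (G k1)) = normalize (S9 (- int k2) (G k1))"
      by (auto simp: phi_def)
    have pg: "prime_elem (G k1)" using G[OF k(1)] by (simp add: prime_def)
    have "S9 (- int k1) (G k1) dvd S9 (- int k2) (G k1)"
      by (metis dvd_normalize_iff dvd_refl e2)
    then have "- int k1 = - int k2" using aper[OF ext pg NPa[OF pg]] G[OF k(1)] by blast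
    then show "k1 = k2" by simp
  qed
  moreover have "finite (prime_factors a \<times> prime_factors b)" by simp
  moreover have "finite (phi ` Sp)" using sub \<open>finite (prime_factors a \<times> prime_factors b)\<close>
    by (rule finite_subset)
  ultimately have "finite Sp" using finite_imageD by blast
  then show ?thesis by (simp add: Sp_def)
qed

end


context
  fixes s :: "'a::{field_char_0,field_gcd} \<Rightarrow> 'a" and tt :: "'a poly" and isSigma :: bool
  assumes ext: "PiSigma_ext s tt isSigma"
begin

abbreviation "Sg \<equiv> ipow (sig_poly s tt)"

lemma V_from_Lcm:
  fixes K :: "int set"
  assumes g: "prime_elem g" and fK: "finite K" and d0: "d \<noteq> 0" and c0: "c \<noteq> 0"
    and dv: "x dvd c * Lcm ((\<lambda>k. Sg k d) ` K)"
  shows "multiplicity g x \<le> multiplicity g c \<or>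
         (\<exists>j\<in>K. multiplicity g x \<le> multiplicity g c + multiplicity g (Sg j d))"
proof -
  define L where "L = Lcm ((\<lambda>k. Sg k d) ` K)"
  have nz: "0 \<notin> (\<lambda>k. Sg k d) ` K" using d0 raut_eq0[OF rS9[OF ext]] by auto
  have L0: "L \<noteq> 0" using nz fK by (simp add: L_def Lcm_0_iff)
  have "multiplicity g x \<le> multiplicity g (c * L)"
    using dv c0 L0 by (intro dvd_imp_multiplicity_le) (auto simp: L_def)
  also have "\<dots> = multiplicity g c + multiplicity g L"
    using g c0 L0 by (rule prime_elem_multiplicity_mult_distrib)
  finally have 1: "multiplicity g x \<le> multiplicity g c + multiplicity g L" .
  from mult_Lcm[OF g _ nz] fK
  have "multiplicity g L = 0 \<or> (\<exists>y\<in>(\<lambda>k. Sg k d) ` K. multiplicity g L \<le> multiplicity g y)"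
    by (simp add: L_def)
  then show ?thesis
  proof
    assume "multiplicity g L = 0" then show ?thesis using 1 by simp
  next
    assume "\<exists>y\<in>(\<lambda>k. Sg k d) ` K. multiplicity g L \<le> multiplicity g y"
    then obtain j where "j \<in> K" "multiplicity g L \<le> multiplicity g (Sg j d)" by blast
    then show ?thesis using 1 by force
  qed
qed

lemma main_mult:
  fixes l lt :: nat and m p d q :: "'a poly"
  assumes m0: "m \<noteq> 0" and p0: "p \<noteq> 0" and d0: "d \<noteq> 0"
    and D1: "Sg (int l) d dvd m * Lcm ((\<lambda>k. Sg k d) ` {0..<int l})"
    and D2: "d dvd p * Lcm ((\<lambda>k. Sg k d) ` {1..int lt})"
    and q: "prime q" and qd: "q dvd ap isSigma d"
  shows "\<exists>Dn. finite (spread s tt (Sg (- int l) (ap isSigma m)) (ap isSigma p)) \<and>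
     Dn \<in> spread s tt (Sg (- int l) (ap isSigma m)) (ap isSigma p) \<and>
     Max (spread s tt (Sg (- int l) (ap isSigma m)) (ap isSigma p)) = Dn \<and>
     multiplicity q (ap isSigma d) \<le> (\<Sum>j\<le>Dn. multiplicity q (Sg (- int l - int j) m)) \<and>
     multiplicity q (ap isSigma d) \<le> (\<Sum>j\<le>Dn. multiplicity q (Sg (int j) p))"
proof -
  define a where "a = Sg (- int l) (ap isSigma m)"
  define bb where "bb = ap isSigma p"
  have qe: "prime_elem q" using q by simp
  have npq: "NP isSigma q" by (rule NP_ap[OF ext d0 qe qd])
  have rs: "raut (Sg k)" for k by (rule rS9[OF ext])
  have Sp: "prime_elem (Sg k q)" for k by (rule S9_prime[OF ext qe])
  have Snp: "NP isSigma (Sg k q)" for k using NP_S[OF ext] npq by simp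
  have T: "multiplicity (Sg x u) (Sg y v) = multiplicity (Sg (x - y) u) v" for x y u v
    by (rule mult_transfer[OF ext])
  define e where "e k = multiplicity (Sg k q) d" for k
  define M where "M k = multiplicity (Sg k q) (Sg (- int l) m)" for k
  define Pv where "Pv k = multiplicity (Sg k q) p" for k
  have V1: "e k \<le> M k \<or> (\<exists>i>0. e k \<le> M k + e (k + i))" for k
  proof -
    have ek: "multiplicity (Sg (k + int l) q) (Sg (int l) d) = e k"
      using T[of "k + int l" q "int l" d] by (simp add: e_def)
    have Mk: "multiplicity (Sg (k + int l) q) m = M k"
      using T[of k q "- int l" m] by (simp add: M_def)
    have ej: "multiplicity (Sg (k + int l) q) (Sg j d) = e (k + (int l - j))" for j
      using T[of "k + int l" q j d] by (simp add: e_def algebra_simps)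
    from V_from_Lcm[OF Sp finite_atLeastLessThan_int d0 m0 D1] show ?thesis
    proof
      assume "multiplicity (Sg (k + int l) q) (Sg (int l) d) \<le> multiplicity (Sg (k + int l) q) m"
      then show ?thesis using ek Mk by simp
    next
      assume "\<exists>j\<in>{0..<int l}. multiplicity (Sg (k + int l) q) (Sg (int l) d)
               \<le> multiplicity (Sg (k + int l) q) m + multiplicity (Sg (k + int l) q) (Sg j d)"
      then obtain j where j: "j \<in> {0..<int l}" "e k \<le> M k + e (k + (int l - j))"
        using ek Mk ej by auto
      then show ?thesis by (intro disjI2 exI[of _ "int l - j"]) auto
    qed
  qed
  have V2: "e k \<le> Pv k \<or> (\<exists>i>0. e k \<le> Pv k + e (k - i))" for k
  proof -
    have ej: "multiplicity (Sg k q) (Sg j d) = e (k - j)" for j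
      using T[of k q j d] by (simp add: e_def)
    from V_from_Lcm[OF Sp finite_atLeastAtMost_int d0 p0 D2]
    have "e k \<le> Pv k \<or> (\<exists>j\<in>{1..int lt}. e k \<le> Pv k + multiplicity (Sg k q) (Sg j d))"
      using T[of k q 0 d] by (simp add: e_def Pv_def)
    then show ?thesis
    proof
      assume "\<exists>j\<in>{1..int lt}. e k \<le> Pv k + multiplicity (Sg k q) (Sg j d)"
      then obtain j where "j \<in> {1..int lt}" "e k \<le> Pv k + e (k - j)" using ej by auto
      then show ?thesis by (intro disjI2 exI[of _ j]) auto
    qed simp
  qed
  define Z where "Z = {k. 0 < e k}"
  have Zd: "Sg k q dvd d" if "k \<in> Z" for k
    using that prime_multiplicity_gt_zero_iff[OF Sp d0] by (simp add: Z_def e_def)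
  have "finite Z"
  proof -
    have "inj_on (\<lambda>k. normalize (Sg k q)) Z"
    proof (rule inj_onI)
      fix x y assume "normalize (Sg x q) = normalize (Sg y q)"
      then have "Sg x q dvd Sg y q" by (metis dvd_normalize_iff dvd_refl)
      then show "x = y" by (rule aper[OF ext qe npq])
    qed
    moreover have "(\<lambda>k. normalize (Sg k q)) ` Z \<subseteq> prime_factors d"
      using Zd Sp d0 by (auto simp: in_prime_factors_iff)
    ultimately show ?thesis by (metis finite_imageD finite_set_mset finite_subset)
  qed
  have mqd: "multiplicity q (ap isSigma d) \<le> e 0"
    using dvd_imp_multiplicity_le[OF ap_dvd d0] by (simp add: e_def)
  have "0 < multiplicity q (ap isSigma d)"
    using prime_multiplicity_gt_zero_iff[OF qe ap_nz[OF d0]] qd by simp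
  then have Z0: "0 \<in> Z" using mqd by (simp add: Z_def)
  define K where "K = Max Z"
  define B where "B = Min Z"
  have Zne: "Z \<noteq> {}" using Z0 by auto
  have KZ: "K \<in> Z" "B \<in> Z" unfolding K_def B_def
    by (rule Max_in[OF \<open>finite Z\<close> Zne], rule Min_in[OF \<open>finite Z\<close> Zne])
  have Kb: "e k > 0 \<Longrightarrow> k \<le> K" for k using \<open>finite Z\<close> by (simp add: K_def Z_def)
  have Bb: "e k > 0 \<Longrightarrow> B \<le> k" for k using \<open>finite Z\<close> by (simp add: B_def Z_def)
  have K0: "0 \<le> K" "B \<le> 0" using Kb Bb Z0 by (auto simp: Z_def)
  have up: "e 0 \<le> (\<Sum>j\<in>{0..K}. M j)" by (rule chain_up[OF V1 Kb])
  have down: "e 0 \<le> (\<Sum>j\<in>{B..0}. Pv j)" by (rule chain_down[OF V2 Bb])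
  have MK: "M K > 0"
  proof -
    have eK: "e K > 0" using KZ by (simp add: Z_def)
    from V1[of K] show ?thesis
    proof
      assume "\<exists>i>0. e K \<le> M K + e (K + i)"
      then obtain i where i: "i > 0" "e K \<le> M K + e (K + i)" by blast
      have "e (K + i) = 0" using Kb[of "K + i"] i by (cases "e (K + i) = 0") auto
      then show ?thesis using i eK by simp
    qed (use eK in simp)
  qed
  have PB: "Pv B > 0"
  proof -
    have eB: "e B > 0" using KZ by (simp add: Z_def)
    from V2[of B] show ?thesis
    proof
      assume "\<exists>i>0. e B \<le> Pv B + e (B - i)"
      then obtain i where i: "i > 0" "e B \<le> Pv B + e (B - i)" by blast
      have "e (B - i) = 0" using Bb[of "B - i"] i by (cases "e (B - i) = 0") auto
      then show ?thesis using i eB by simp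
    qed (use eB in simp)
  qed
  have m0': "Sg (- int l) m \<noteq> 0" using m0 raut_eq0[OF rs] by simp
  have "Sg K q dvd Sg (- int l) m"
    using MK prime_multiplicity_gt_zero_iff[OF Sp m0'] by (simp add: M_def)
  then have Ka: "Sg K q dvd a" unfolding a_def by (rule dvd_S_ap[OF ext Sp Snp])
  have "Sg B q dvd Sg 0 p" using PB prime_multiplicity_gt_zero_iff[OF Sp p0] by (simp add: Pv_def)
  then have "Sg B q dvd Sg 0 bb" unfolding bb_def by (rule dvd_S_ap[OF ext Sp Snp])
  then have "Sg (K - B) (Sg B q) dvd Sg (K - B) bb" by (simp add: raut_dvd_iff[OF rs])
  then have Kb2: "Sg K q dvd (sig_poly s tt ^^ nat (K - B)) bb"
    using K0 by (simp add: S9_add[OF ext] spread_S[OF ext])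
  have a0: "a \<noteq> 0" using m0 ap_nz raut_eq0[OF rs] by (simp add: a_def)
  have bb0: "bb \<noteq> 0" using p0 ap_nz by (simp add: bb_def)
  have "Sg K q dvd gcd a ((sig_poly s tt ^^ nat (K - B)) bb)" using Ka Kb2 by simp
  then have "degree (Sg K q) \<le> degree (gcd a ((sig_poly s tt ^^ nat (K - B)) bb))"
    using a0 by (intro dvd_imp_degree_le) auto
  then have KBs: "nat (K - B) \<in> spread s tt a bb"
    using prime_deg[OF ext Sp[of K]] by (simp add: spread_def)
  have NPa: "NP isSigma g" if "prime_elem g" "g dvd a" for g
  proof -
    have "Sg (int l) g dvd Sg (int l) a" using that by (simp add: raut_dvd_iff[OF rs])
    then have "Sg (int l) g dvd ap isSigma m" by (simp add: a_def S9_add[OF ext])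
    then have "NP isSigma (Sg (int l) g)" by (rule NP_ap[OF ext m0 S9_prime[OF ext that(1)]])
    then show ?thesis using NP_S[OF ext] by simp
  qed
  have fin: "finite (spread s tt a bb)" by (rule spread_finite[OF ext a0 bb0 NPa])
  define Dn where "Dn = Max (spread s tt a bb)"
  have Dn_in: "Dn \<in> spread s tt a bb" unfolding Dn_def using fin KBs by (intro Max_in) auto
  have KB: "nat (K - B) \<le> Dn" using fin KBs by (simp add: Dn_def)
  have KD: "K \<le> int Dn" "- int Dn \<le> B" using KB K0 by auto
  have r1: "(\<Sum>j\<in>{0..int Dn}. M j) = (\<Sum>j\<le>Dn. multiplicity q (Sg (- int l - int j) m))"
  proof -
    have "{0..int Dn} = int ` {..Dn}"
    proof (rule set_eqI, rule iffI)
      fix x assume "x \<in> {0..int Dn}"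
      then show "x \<in> int ` {..Dn}" by (intro image_eqI[of _ _ "nat x"]) auto
    qed auto
    then have "(\<Sum>j\<in>{0..int Dn}. M j) = (\<Sum>j\<le>Dn. M (int j))" by (simp add: sum.reindex)
    also have "\<dots> = (\<Sum>j\<le>Dn. multiplicity q (Sg (- int l - int j) m))"
    proof (intro sum.cong refl)
      fix j
      have "multiplicity q (Sg (- int l - int j) m) = multiplicity (Sg (int j + int l) q) m"
        using mult_transfer_l[OF ext, of q "- int l - int j" m] by simp
      moreover have "M (int j) = multiplicity (Sg (int j + int l) q) m"
        using T[of "int j" q "- int l" m] by (simp add: M_def)
      ultimately show "M (int j) = multiplicity q (Sg (- int l - int j) m)" by simp
    qed
    finally show ?thesis .
  qed
  have r2: "(\<Sum>j\<in>{- int Dn..0}. Pv j) = (\<Sum>j\<le>Dn. multiplicity q (Sg (int j) p))"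
  proof -
    have "{- int Dn..0} = (\<lambda>j. - int j) ` {..Dn}"
    proof (rule set_eqI, rule iffI)
      fix x assume "x \<in> {- int Dn..0}"
      then show "x \<in> (\<lambda>j. - int j) ` {..Dn}" by (intro image_eqI[of _ _ "nat (-x)"]) auto
    qed auto
    then have "(\<Sum>j\<in>{- int Dn..0}. Pv j) = (\<Sum>j\<le>Dn. Pv (- int j))" by (simp add: sum.reindex inj_on_def)
    also have "\<dots> = (\<Sum>j\<le>Dn. multiplicity q (Sg (int j) p))"
    proof (intro sum.cong refl)
      fix j
      show "Pv (- int j) = multiplicity q (Sg (int j) p)"
        using mult_transfer_l[OF ext, of q "int j" p] by (simp add: Pv_def)
    qed
    finally show ?thesis .
  qed
  have "(\<Sum>j\<in>{0..K}. M j) \<le> (\<Sum>j\<in>{0..int Dn}. M j)" using KD by (intro sum_mono2) auto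
  moreover have "(\<Sum>j\<in>{B..0}. Pv j) \<le> (\<Sum>j\<in>{- int Dn..0}. Pv j)" using KD by (intro sum_mono2) auto
  ultimately show ?thesis using up down mqd r1 r2 fin Dn_in
    unfolding a_def[symmetric] bb_def[symmetric] Dn_def[symmetric]
    by (intro exI[of _ Dn]) auto
qed

end


theorem lemma4:
  fixes s :: "'a::{field_char_0,field_gcd} \<Rightarrow> 'a" and tt :: "'a poly" and isSigma :: bool
    and l :: nat and A :: "nat \<Rightarrow> ('a poly)^'n::finite^'n" and b :: "('a poly)^'n"
    and P :: "('a,'n) opmat" and lt :: nat and At :: "nat \<Rightarrow> ('a poly)^'n^'n"
    and bt :: "('a poly)^'n" and m p d :: "'a poly" and z :: "('a poly)^'n"
  assumes ext: "PiSigma_ext s tt isSigma"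
    and detA: "det (A l) \<noteq> 0"
    and unimod: "unimodular s tt P"
    and PA: "op_mult s tt P (poly_op l A) = poly_op lt At"
    and Pb: "op_apply s tt P (fvec b) = fvec bt"
    and detAt: "det (At 0) \<noteq> 0"
    and m: "common_denom m (matrix_inv (fmat (A l)))"
    and p: "common_denom p (matrix_inv (fmat (At 0)))"
    and d: "d \<noteq> 0"
    and red: "\<forall>c. c dvd d \<and> (\<forall>i. c dvd z$i) \<longrightarrow> is_unit c"
    and sol: "op_apply s tt (poly_op l A) ((\<chi> i. to_fract (z$i) / to_fract d)) = fvec b"
  shows "let D = disp s tt (ipow (sig_poly s tt) (- int l) (ap isSigma m)) (ap isSigma p);
             J = {j::nat. ereal (real j) \<le> D}
         in ap isSigma d dvd
              gcd (\<Prod>j\<in>J. ipow (sig_poly s tt) (- int l - int j) m)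
                  (\<Prod>j\<in>J. ipow (sig_poly s tt) (int j) p)"
proof -
  have fa: "field_aut s" by (rule fa[OF ext])
  have dtt: "degree tt = 1" by (rule dtt[OF ext])
  have m0: "m \<noteq> 0" using m by (simp add: common_denom_def)
  have p0: "p \<noteq> 0" using p by (simp add: common_denom_def)
  have rs: "raut (ipow (sig_poly s tt) k)" for k by (rule rS9[OF ext])
  note D1' = D1[OF fa dtt detA m d red sol]
  note D2' = D2[OF fa dtt unimod PA Pb detAt p d red sol]
  define D where "D = disp s tt (ipow (sig_poly s tt) (- int l) (ap isSigma m)) (ap isSigma p)"
  define J where "J = {j::nat. ereal (real j) \<le> D}"
  define X1 where "X1 = (\<Prod>j\<in>J. ipow (sig_poly s tt) (- int l - int j) m)"
  define X2 where "X2 = (\<Prod>j\<in>J. ipow (sig_poly s tt) (int j) p)"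
  have apd0: "ap isSigma d \<noteq> 0" by (rule ap_nz[OF d])
  have both: "multiplicity q (ap isSigma d) \<le> multiplicity q X1 \<and>
              multiplicity q (ap isSigma d) \<le> multiplicity q X2" if q: "prime q" for q
  proof (cases "q dvd ap isSigma d")
    case False
    then show ?thesis by (simp add: not_dvd_imp_multiplicity_0)
  next
    case True
    obtain Dn where fin: "finite (spread s tt (ipow (sig_poly s tt) (- int l) (ap isSigma m)) (ap isSigma p))"
      and Dn_in: "Dn \<in> spread s tt (ipow (sig_poly s tt) (- int l) (ap isSigma m)) (ap isSigma p)"
      and Dn: "Max (spread s tt (ipow (sig_poly s tt) (- int l) (ap isSigma m)) (ap isSigma p)) = Dn"
      and i1: "multiplicity q (ap isSigma d) \<le> (\<Sum>j\<le>Dn. multiplicity q (ipow (sig_poly s tt) (- int l - int j) m))"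
      and i2: "multiplicity q (ap isSigma d) \<le> (\<Sum>j\<le>Dn. multiplicity q (ipow (sig_poly s tt) (int j) p))"
      using main_mult[OF ext m0 p0 d D1' D2' q True] by blast
    have "D = ereal (real Dn)" using fin Dn_in Dn by (auto simp: D_def disp_def Let_def)
    then have J: "J = {..Dn}" by (auto simp: J_def)
    have qe: "prime_elem q" using q by simp
    have "multiplicity q X1 = (\<Sum>j\<le>Dn. multiplicity q (ipow (sig_poly s tt) (- int l - int j) m))"
      unfolding X1_def J
      by (rule prime_elem_multiplicity_prod_distrib[OF qe]) (use m0 raut_eq0[OF rs] in auto)
    moreover have "multiplicity q X2 = (\<Sum>j\<le>Dn. multiplicity q (ipow (sig_poly s tt) (int j) p))"
      unfolding X2_def J
      by (rule prime_elem_multiplicity_prod_distrib[OF qe]) (use p0 raut_eq0[OF rs] in auto)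
    ultimately show ?thesis using i1 i2 by simp
  qed
  have "ap isSigma d dvd X1" using both by (intro multiplicity_le_imp_dvd[OF apd0]) blast
  moreover have "ap isSigma d dvd X2" using both by (intro multiplicity_le_imp_dvd[OF apd0]) blast
  ultimately have "ap isSigma d dvd gcd X1 X2" by (rule gcd_greatest)
  then show ?thesis by (simp add: Let_def D_def[symmetric] J_def[symmetric] X1_def X2_def)
qed


end
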